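(* Let $a, b, n$ be positive integers with $b>1$, $n>1$ and $\gcd(r_b(n),a)=1$, and let $\Bbbk$ be a field. Let $\mathcal{L} \subseteq \mathbb{Z}^n$ be the subgroup generated by the $n-1$ vectors $b\,e_k - (b+1)\,e_{k+1} + e_{k+2}$ for $k = 1, \ldots, n-2$, together with $(a+1)\,e_1 + b\, e_{n-1} - (b+1)\, e_n$ (here $e_1,\dots,e_n$ is the standard basis of $\mathbb{Z}^n$). Then the kernel of the $\Bbbk$-algebra homomorphism $\Bbbk[x_1,\ldots,x_n] \to \Bbbk[t]$, $x_i \mapsto t^{a_i}$, is equal to the ideal generated by $\{x_1^{u_1}\cdots x_n^{u_n} - x_1^{v_1}\cdots x_n^{v_n} \mid u, v \in \mathbb{N}^n,\ u - v \in \mathcal{L}\}$.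
   Context: For an integer $\ell \ge 1$, $r_b(\ell) = \sum_{j=0}^{\ell-1} b^j$, and $r_b(0)=0$. For $i \ge 1$, $a_i := r_b(n) + a\, r_b(i-1)$; $S_a(b,n)$ is the numerical semigroup generated by $a_1,\ldots,a_n$. *)

theory Defs
  imports "HOL-Library.Poly_Mapping" "HOL-Computational_Algebra.Polynomial"
begin

definition rb :: "nat \<Rightarrow> nat \<Rightarrow> nat" where
  "rb b l = (\<Sum>j<l. b ^ j)"

text \<open>Generators a_i = r_b(n) + a r_b(i-1), i >= 1. Variables are 0-indexed:
  variable x_(i+1) of the paper is index i, with degree agen a b n i = a_(i+1).\<close>
definition agen :: "nat \<Rightarrow> nat \<Rightarrow> nat \<Rightarrow> nat \<Rightarrow> nat" where
  "agen a b n i = rb b n + a * rb b i"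

text \<open>Multivariate polynomials over 'k: finitely supported maps from exponent
  vectors (finitely supported maps variable index to exponent) to coefficients.
  k[x_1..x_n] is the subring of polynomials only involving variables 0..n-1.\<close>
definition polys_n :: "nat \<Rightarrow> ((nat \<Rightarrow>\<^sub>0 nat) \<Rightarrow>\<^sub>0 'k::field) set" where
  "polys_n n = {p. \<forall>u\<in>Poly_Mapping.keys p. Poly_Mapping.keys u \<subseteq> {..<n}}"

definition mono :: "(nat \<Rightarrow>\<^sub>0 nat) \<Rightarrow> ((nat \<Rightarrow>\<^sub>0 nat) \<Rightarrow>\<^sub>0 'k::field)" where
  "mono u = Poly_Mapping.single u 1"

definition evalt :: "nat \<Rightarrow> nat \<Rightarrow> nat \<Rightarrow> ((nat \<Rightarrow>\<^sub>0 nat) \<Rightarrow>\<^sub>0 'k::field) \<Rightarrow> 'k poly" where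
  "evalt a b n p = (\<Sum>u\<in>Poly_Mapping.keys p. monom (Poly_Mapping.lookup p u) (\<Sum>i<n. Poly_Mapping.lookup u i * agen a b n i))"

definition toric_kernel :: "nat \<Rightarrow> nat \<Rightarrow> nat \<Rightarrow> ((nat \<Rightarrow>\<^sub>0 nat) \<Rightarrow>\<^sub>0 'k::field) set" where
  "toric_kernel a b n = {p \<in> polys_n n. evalt a b n p = 0}"

definition ideal_gen :: "'r::comm_ring_1 set \<Rightarrow> 'r set \<Rightarrow> 'r set" where
  "ideal_gen R S = {\<Sum>j<m. c j * s j | (m::nat) c s. \<forall>j<m. c j \<in> R \<and> s j \<in> S}"

text \<open>Standard basis vector e_(i+1) of Z^n (0-indexed), vectors as nat \<Rightarrow> int.\<close>
definition evec :: "nat \<Rightarrow> nat \<Rightarrow> int" where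
  "evec i = (\<lambda>j. if j = i then 1 else 0)"

text \<open>The n-1 lattice generators (0-indexed): for k < n-2 the vector
  b e_(k+1) - (b+1) e_(k+2) + e_(k+3); for k = n-2 the vector
  (a+1) e_1 + b e_(n-1) - (b+1) e_n.\<close>
definition lgen :: "nat \<Rightarrow> nat \<Rightarrow> nat \<Rightarrow> nat \<Rightarrow> nat \<Rightarrow> int" where
  "lgen a b n k = (if k < n - 2
      then (\<lambda>j. int b * evec k j - int (b + 1) * evec (k + 1) j + evec (k + 2) j)
      else (\<lambda>j. int (a + 1) * evec 0 j + int b * evec (n - 2) j - int (b + 1) * evec (n - 1) j))"

definition lattice :: "nat \<Rightarrow> nat \<Rightarrow> nat \<Rightarrow> (nat \<Rightarrow> int) set" where
  "lattice a b n = {(\<lambda>j. \<Sum>k<n - 1. c k * lgen a b n k j) | c. True}"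

definition lattice_binomials :: "nat \<Rightarrow> nat \<Rightarrow> nat \<Rightarrow> ((nat \<Rightarrow>\<^sub>0 nat) \<Rightarrow>\<^sub>0 'k::field) set" where
  "lattice_binomials a b n = {mono u - mono v | u v.
      Poly_Mapping.keys u \<subseteq> {..<n} \<and> Poly_Mapping.keys v \<subseteq> {..<n} \<and>
      (\<lambda>j. int (Poly_Mapping.lookup u j) - int (Poly_Mapping.lookup v j)) \<in> lattice a b n}"

end

theory Submission
  imports Defs
begin

lemma rb_Suc: "rb b (Suc l) = b * rb b l + 1"
proof (induction l)
  case 0 then show ?case by (simp add: rb_def)
next
  case (Suc l)
  have "rb b (Suc (Suc l)) = b ^ Suc l + rb b (Suc l)" by (simp add: rb_def)
  also have "\<dots> = b * (b ^ l + rb b l) + 1" using Suc by (simp add: algebra_simps)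
  also have "b ^ l + rb b l = rb b (Suc l)" by (simp add: rb_def)
  finally show ?case .
qed

lemma rb_0[simp]: "rb b 0 = 0" by (simp add: rb_def)
lemma rb_1[simp]: "rb b (Suc 0) = 1" by (simp add: rb_def)

definition wsum :: "nat \<Rightarrow> (nat \<Rightarrow> int) \<Rightarrow> (nat \<Rightarrow> int) \<Rightarrow> int" where
  "wsum n f w = (\<Sum>j<n. w j * f j)"

lemma wsum_evec: assumes "k < n" shows "(\<Sum>j<n. evec k j * f j) = f k"
proof -
  have "(\<Sum>j<n. evec k j * f j) = (\<Sum>j<n. if j = k then f j else 0)"
    by (rule sum.cong) (auto simp: evec_def)
  then show ?thesis using assms by simp
qed

lemma wsum_gen:
  assumes "k < n - 2"
  shows "wsum n f (lgen a b n k) = int b * f k - int (b+1) * f (k+1) + f (k+2)"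
proof -
  have "wsum n f (lgen a b n k) = (\<Sum>j<n. int b * (evec k j * f j) - int (b+1) * (evec (k+1) j * f j) + evec (k+2) j * f j)"
    using assms unfolding wsum_def lgen_def by (intro sum.cong) (auto simp: algebra_simps)
  also have "\<dots> = int b * (\<Sum>j<n. evec k j * f j) - int (b+1) * (\<Sum>j<n. evec (k+1) j * f j) + (\<Sum>j<n. evec (k+2) j * f j)"
    by (simp add: sum.distrib sum_subtractf sum_distrib_left)
  also have "\<dots> = int b * f k - int (b+1) * f (k+1) + f (k+2)"
    using assms by (simp add: wsum_evec)
  finally show ?thesis .
qed

lemma wsum_last:
  assumes "n > 1"
  shows "wsum n f (lgen a b n (n-2)) = int (a+1) * f 0 + int b * f (n-2) - int (b+1) * f (n-1)"
proof -
  have "wsum n f (lgen a b n (n-2)) = (\<Sum>j<n. int (a+1) * (evec 0 j * f j) + int b * (evec (n-2) j * f j) - int (b+1) * (evec (n-1) j * f j))"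
    using assms unfolding wsum_def lgen_def by (intro sum.cong) (auto simp: algebra_simps)
  also have "\<dots> = int (a+1) * (\<Sum>j<n. evec 0 j * f j) + int b * (\<Sum>j<n. evec (n-2) j * f j) - int (b+1) * (\<Sum>j<n. evec (n-1) j * f j)"
    by (simp add: sum.distrib sum_subtractf sum_distrib_left)
  also have "\<dots> = int (a+1) * f 0 + int b * f (n-2) - int (b+1) * f (n-1)"
    using assms by (simp add: wsum_evec)
  finally show ?thesis .
qed

lemma wsum_lin: "wsum n f (\<lambda>j. v j - c * w j) = wsum n f v - c * wsum n f w"
  by (simp add: wsum_def sum_subtractf sum_distrib_left algebra_simps)

lemma wsum_lin2: "wsum n f (\<lambda>j. v j + c * w j) = wsum n f v + c * wsum n f w"
  by (simp add: wsum_def sum.distrib sum_distrib_left algebra_simps)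

abbreviation ph1 where "ph1 b n w \<equiv> wsum n (\<lambda>j. 1 - int (rb b j)) w"
abbreviation ph2 where "ph2 b n w \<equiv> wsum n (\<lambda>j. int (rb b j)) w"

lemma ph_gen:
  assumes "k < n - 2"
  shows "ph1 b n (lgen a b n k) = 0" "ph2 b n (lgen a b n k) = 0"
proof -
  have r: "int (rb b (k+1)) = int b * int (rb b k) + 1" "int (rb b (k+2)) = int b * int (rb b (k+1)) + 1"
    by (simp_all add: rb_Suc algebra_simps)
  show "ph1 b n (lgen a b n k) = 0" "ph2 b n (lgen a b n k) = 0"
    unfolding wsum_gen[OF assms] r by (simp_all add: algebra_simps)
qed

lemma ph_last:
  assumes "n > 1"
  shows "ph1 b n (lgen a b n (n-2)) = int a + int (rb b n)"
        "ph2 b n (lgen a b n (n-2)) = - int (rb b n)"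
proof -
  obtain k where n: "n = Suc (Suc k)" using assms by (metis Suc_diff_Suc diff_Suc_1 less_imp_Suc_add add_Suc)
  have k: "n - 2 = k" "n - 1 = Suc k" using n by auto
  have e1: "ph1 b n (lgen a b n (n-2)) = int (a+1) * (1 - int (rb b 0)) + int b * (1 - int (rb b k)) - int (b+1) * (1 - int (rb b (Suc k)))"
    using wsum_last[OF assms, where f="\<lambda>j. 1 - int (rb b j)" and a=a and b=b] unfolding k .
  have e2: "ph2 b n (lgen a b n (n-2)) = int (a+1) * int (rb b 0) + int b * int (rb b k) - int (b+1) * int (rb b (Suc k))"
    using wsum_last[OF assms, where f="\<lambda>j. int (rb b j)" and a=a and b=b] unfolding k .
  have r: "int (rb b (Suc k)) = int b * int (rb b k) + 1" "int (rb b n) = int b * int (rb b (Suc k)) + 1"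
    unfolding n by (simp_all add: rb_Suc algebra_simps)
  show "ph1 b n (lgen a b n (n-2)) = int a + int (rb b n)"
       "ph2 b n (lgen a b n (n-2)) = - int (rb b n)"
    unfolding e1 e2 r(2) unfolding r(1) by (simp_all add: algebra_simps)
qed

lemma lat_zero: "(\<lambda>j. 0) \<in> lattice a b n"
  unfolding lattice_def by (auto intro!: exI[of _ "\<lambda>k. 0"])

lemma lat_add: "v \<in> lattice a b n \<Longrightarrow> w \<in> lattice a b n \<Longrightarrow> (\<lambda>j. v j + w j) \<in> lattice a b n"
  unfolding lattice_def
  apply clarify
  subgoal for c d by (rule exI[of _ "\<lambda>k. c k + d k"]) (auto simp: sum.distrib algebra_simps)
  done

lemma lat_smult: "v \<in> lattice a b n \<Longrightarrow> (\<lambda>j. m * v j) \<in> lattice a b n"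
  unfolding lattice_def
  apply clarify
  subgoal for c by (rule exI[of _ "\<lambda>k. m * c k"]) (auto simp: sum_distrib_left algebra_simps)
  done

lemma lat_diff: "v \<in> lattice a b n \<Longrightarrow> w \<in> lattice a b n \<Longrightarrow> (\<lambda>j. v j - w j) \<in> lattice a b n"
  using lat_add[of v a b n "\<lambda>j. (-1) * w j"] lat_smult[of w a b n "-1"] by simp

lemma lat_gen: "k < n - 1 \<Longrightarrow> lgen a b n k \<in> lattice a b n"
  unfolding lattice_def
proof (rule CollectI, rule exI[of _ "\<lambda>i. if i = k then 1 else 0"], rule conjI[OF ext TrueI])
  fix j assume k: "k < n - 1"
  have "(\<Sum>i<n - 1. (if i = k then 1 else 0) * lgen a b n i j) = (\<Sum>i<n - 1. if i = k then lgen a b n k j else 0)"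
    by (rule sum.cong) auto
  then show "lgen a b n k j = (\<Sum>i<n - 1. (if i = k then 1 else 0) * lgen a b n i j)" using k by simp
qed

lemma lat_smult_gen: "k < n - 1 \<Longrightarrow> (\<lambda>j. m * lgen a b n k j) \<in> lattice a b n"
  using lat_gen lat_smult by blast

definition emb :: "int \<Rightarrow> int \<Rightarrow> nat \<Rightarrow> int" where
  "emb x y j = (if j = 0 then x else if j = 1 then y else 0)"

lemma reduce_base:
  assumes "n > 1" and v: "\<forall>j\<ge>2. v j = 0"
  shows "(\<lambda>j. v j - emb (ph1 b n v) (ph2 b n v) j) \<in> lattice a b n"
proof -
  have s: "wsum n f v = (\<Sum>j<2. v j * f j)" for f
    unfolding wsum_def using assms v
    by (intro sum.mono_neutral_right) auto
  have p: "ph1 b n v = v 0" "ph2 b n v = v 1"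
    by (simp_all add: s numeral_2_eq_2)
  have "(\<lambda>j. v j - emb (ph1 b n v) (ph2 b n v) j) = (\<lambda>j. 0)"
  proof
    fix j show "v j - emb (ph1 b n v) (ph2 b n v) j = 0"
      unfolding p emb_def using v[rule_format, of j] by (cases "j < 2") (auto simp: numeral_2_eq_2 less_Suc_eq)
  qed
  then show ?thesis using lat_zero by simp
qed

lemma reduce:
  assumes "n > 1"
  shows "m \<le> n \<Longrightarrow> \<forall>v. (\<forall>j\<ge>m. v j = 0) \<longrightarrow> (\<lambda>j. v j - emb (ph1 b n v) (ph2 b n v) j) \<in> lattice a b n"
proof (induction m)
  case 0
  show ?case
  proof (intro allI impI)
    fix v :: "nat \<Rightarrow> int" assume "\<forall>j\<ge>0. v j = 0"
    then have "\<forall>j\<ge>2. v j = 0" by auto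
    then show "(\<lambda>j. v j - emb (ph1 b n v) (ph2 b n v) j) \<in> lattice a b n" by (rule reduce_base[OF assms])
  qed
next
  case (Suc m)
  show ?case
  proof (intro allI impI)
    fix v :: "nat \<Rightarrow> int" assume v: "\<forall>j\<ge>Suc m. v j = 0"
    show "(\<lambda>j. v j - emb (ph1 b n v) (ph2 b n v) j) \<in> lattice a b n"
    proof (cases "Suc m \<le> 2")
      case True
      then have "\<forall>j\<ge>2. v j = 0" using v by auto
      then show ?thesis by (rule reduce_base[OF assms])
    next
      case False
      then have m2: "2 \<le> m" by simp
      have mn: "m < n" using Suc.prems by simp
      have IH: "\<And>w. \<forall>j\<ge>m. w j = 0 \<Longrightarrow> (\<lambda>j. w j - emb (ph1 b n w) (ph2 b n w) j) \<in> lattice a b n"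
        using Suc.IH mn by simp
      define g where "g = lgen a b n (m-2)"
      have mk: "m - 2 < n - 2" using m2 mn by auto
      have gdef: "g = (\<lambda>j. int b * evec (m-2) j - int (b+1) * evec (m-2+1) j + evec (m-2+2) j)"
        using mk by (simp add: g_def lgen_def)
      have mm: "m-2+2 = m" "m-2+1 = m-1" using m2 by auto
      have gm: "g m = 1" "\<And>j. j > m \<Longrightarrow> g j = 0"
        unfolding gdef mm using m2 by (auto simp: evec_def)
      define v' where "v' = (\<lambda>j. v j - v m * g j)"
      have v': "\<forall>j\<ge>m. v' j = 0"
      proof (intro allI impI)
        fix j assume j: "m \<le> j"
        show "v' j = 0"
        proof (cases "j = m")
          case True then show ?thesis using gm by (simp add: v'_def)
        next
          case False then have "m < j" using j by simp
          then show ?thesis using gm v by (simp add: v'_def)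
        qed
      qed
      have pg: "ph1 b n g = 0" "ph2 b n g = 0" using ph_gen[OF mk] unfolding g_def by simp_all
      have p1: "ph1 b n v' = ph1 b n v" "ph2 b n v' = ph2 b n v"
        unfolding v'_def wsum_lin pg by simp_all
      have "(\<lambda>j. v' j - emb (ph1 b n v') (ph2 b n v') j) \<in> lattice a b n"
        by (rule IH[OF v'])
      moreover have "(\<lambda>j. v m * g j) \<in> lattice a b n"
        unfolding g_def using mk by (intro lat_smult_gen) auto
      ultimately have "(\<lambda>j. (v' j - emb (ph1 b n v') (ph2 b n v') j) + v m * g j) \<in> lattice a b n"
        by (rule lat_add)
      then show ?thesis
        unfolding p1 by (simp add: v'_def)
    qed
  qed
qed

lemma wsum_agen: "wsum n (\<lambda>j. int (agen a b n j)) w = int (rb b n) * ph1 b n w + (int (rb b n) + int a) * ph2 b n w"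
proof -
  have "wsum n (\<lambda>j. int (agen a b n j)) w = (\<Sum>j<n. int (rb b n) * (w j * (1 - int (rb b j))) + (int (rb b n) + int a) * (w j * int (rb b j)))"
    unfolding wsum_def agen_def by (rule sum.cong) (simp_all add: algebra_simps)
  also have "\<dots> = int (rb b n) * ph1 b n w + (int (rb b n) + int a) * ph2 b n w"
    unfolding wsum_def by (simp add: sum.distrib sum_distrib_left)
  finally show ?thesis .
qed

lemma lattice_ker:
  assumes "n > 1" "w \<in> lattice a b n"
  shows "wsum n (\<lambda>j. int (agen a b n j)) w = 0"
proof -
  obtain c where w: "w = (\<lambda>j. \<Sum>k<n - 1. c k * lgen a b n k j)" using assms unfolding lattice_def by auto
  have "wsum n f w = (\<Sum>k<n - 1. c k * wsum n f (lgen a b n k))" for f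
  proof -
    have "wsum n f w = (\<Sum>j<n. \<Sum>k<n - 1. c k * (lgen a b n k j * f j))"
      unfolding w wsum_def by (simp add: sum_distrib_right mult.assoc)
    also have "\<dots> = (\<Sum>k<n - 1. \<Sum>j<n. c k * (lgen a b n k j * f j))"
      by (rule sum.swap)
    also have "\<dots> = (\<Sum>k<n - 1. c k * wsum n f (lgen a b n k))"
      unfolding wsum_def by (simp add: sum_distrib_left)
    finally show ?thesis .
  qed
  moreover have "wsum n (\<lambda>j. int (agen a b n j)) (lgen a b n k) = 0" if "k < n - 1" for k
  proof (cases "k < n - 2")
    case True then show ?thesis by (simp add: wsum_agen ph_gen)
  next
    case False then have "k = n - 2" using that by simp
    then show ?thesis using ph_last[OF assms(1), of b a] by (simp add: wsum_agen algebra_simps)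
  qed
  ultimately show ?thesis by simp
qed

lemma ker_lattice:
  assumes "n > 1" "gcd (rb b n) a = 1"
    and sup: "\<forall>j\<ge>n. w j = 0" and ker: "wsum n (\<lambda>j. int (agen a b n j)) w = 0"
  shows "w \<in> lattice a b n"
proof -
  define R where "R = int (rb b n)"
  define x where "x = ph1 b n w"
  define y where "y = ph2 b n w"
  have "rb b n = rb b (Suc (n - 1))" using assms(1) by simp
  then have "rb b n > 0" by (simp add: rb_Suc)
  then have Rpos: "R > 0" unfolding R_def by simp
  have e: "R * x + (R + int a) * y = 0" using ker unfolding wsum_agen R_def x_def y_def .
  have "int a * y = R * (- x - y)" using e by (simp add: algebra_simps)
  then have "R dvd int a * y" by simp
  moreover have "coprime R (int a)" using assms(2) unfolding R_def
    by (simp add: coprime_int_iff coprime_iff_gcd_eq_1)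
  ultimately have "R dvd y" using coprime_dvd_mult_right_iff by blast
  then obtain q where q: "y = R * q" by blast
  have "R * (x + y + int a * q) = 0" using e q by (simp add: algebra_simps)
  then have "x + y + int a * q = 0" using Rpos by simp
  then have xq: "x = - (R + int a) * q" using q by (simp add: algebra_simps)
  define g where "g = lgen a b n (n-2)"
  have gl: "g \<in> lattice a b n" unfolding g_def using assms(1) by (intro lat_gen) auto
  have gdef: "g = (\<lambda>j. int (a + 1) * evec 0 j + int b * evec (n - 2) j - int (b + 1) * evec (n - 1) j)"
    unfolding g_def lgen_def by simp
  have gs: "\<forall>j\<ge>n. g j = 0" using assms(1) unfolding gdef by (auto simp: evec_def)
  have pg: "ph1 b n g = int a + R" "ph2 b n g = - R" using ph_last[OF assms(1)] unfolding g_def R_def by auto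
  have r1: "(\<lambda>j. w j - emb x y j) \<in> lattice a b n"
    using reduce[OF assms(1), of n b a] sup unfolding x_def y_def by blast
  have r2: "(\<lambda>j. g j - emb (int a + R) (- R) j) \<in> lattice a b n"
    using reduce[OF assms(1), of n b a] gs unfolding pg[symmetric] by blast
  have "(\<lambda>j. (w j - emb x y j) - (-q) * (g j - emb (int a + R) (- R) j) + (-q) * g j) \<in> lattice a b n"
    by (intro lat_add lat_diff lat_smult r1 r2 gl)
  moreover have "(\<lambda>j. (w j - emb x y j) - (-q) * (g j - emb (int a + R) (- R) j) + (-q) * g j) = w"
  proof
    fix j
    show "(w j - emb x y j) - (-q) * (g j - emb (int a + R) (- R) j) + (-q) * g j = w j"
      unfolding emb_def xq q by (simp add: algebra_simps)
  qed
  ultimately show ?thesis by simp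
qed




definition dg :: "nat \<Rightarrow> nat \<Rightarrow> nat \<Rightarrow> (nat \<Rightarrow>\<^sub>0 nat) \<Rightarrow> nat" where
  "dg a b n u = (\<Sum>i<n. Poly_Mapping.lookup u i * agen a b n i)"

lemma dg_add: "dg a b n (u + v) = dg a b n u + dg a b n v"
  by (simp add: dg_def lookup_add sum.distrib algebra_simps)

lemma evalt_dg: "evalt a b n p = (\<Sum>u\<in>Poly_Mapping.keys p. monom (Poly_Mapping.lookup p u) (dg a b n u))"
  by (simp add: evalt_def dg_def)

lemma evalt_super:
  assumes "finite S" "Poly_Mapping.keys p \<subseteq> S"
  shows "evalt a b n p = (\<Sum>u\<in>S. monom (Poly_Mapping.lookup p u) (dg a b n u))"
  unfolding evalt_dg using assms
  by (intro sum.mono_neutral_left) (auto simp: in_keys_iff)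

lemma evalt_add: "evalt a b n (p + q) = evalt a b n p + evalt a b n q"
proof -
  let ?S = "Poly_Mapping.keys p \<union> Poly_Mapping.keys q"
  have "evalt a b n (p + q) = (\<Sum>u\<in>?S. monom (Poly_Mapping.lookup (p+q) u) (dg a b n u))"
    using keys_add[of p q] by (intro evalt_super) auto
  also have "\<dots> = (\<Sum>u\<in>?S. monom (Poly_Mapping.lookup p u) (dg a b n u)) + (\<Sum>u\<in>?S. monom (Poly_Mapping.lookup q u) (dg a b n u))"
    by (simp add: lookup_add add_monom[symmetric] sum.distrib)
  also have "\<dots> = evalt a b n p + evalt a b n q"
    by (subst (1 2) evalt_super[of ?S]) auto
  finally show ?thesis .
qed

lemma evalt_zero[simp]: "evalt a b n 0 = 0" by (simp add: evalt_def)

lemma evalt_uminus: "evalt a b n (- p) = - evalt a b n p"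
  by (simp add: evalt_def lookup_uminus sum_negf minus_monom[symmetric])

lemma evalt_diff: "evalt a b n (p - q) = evalt a b n p - evalt a b n q"
  using evalt_add[of a b n p "-q"] evalt_uminus[of a b n q] by simp

lemma evalt_sum: "evalt a b n (sum f S) = (\<Sum>x\<in>S. evalt a b n (f x))"
  by (induction S rule: infinite_finite_induct) (auto simp: evalt_add)

lemma evalt_single: "evalt a b n (Poly_Mapping.single w c) = monom c (dg a b n w)"
  by (simp add: evalt_dg)

lemma pm_expand: "p = (\<Sum>w\<in>Poly_Mapping.keys p. Poly_Mapping.single w (Poly_Mapping.lookup p w))"
proof (rule poly_mapping_eqI)
  fix k
  have "Poly_Mapping.lookup (\<Sum>w\<in>Poly_Mapping.keys p. Poly_Mapping.single w (Poly_Mapping.lookup p w)) k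
     = (\<Sum>w\<in>Poly_Mapping.keys p. if w = k then Poly_Mapping.lookup p w else 0)"
    by (simp add: lookup_sum lookup_single when_def)
  also have "\<dots> = Poly_Mapping.lookup p k" by (simp add: in_keys_iff)
  finally show "Poly_Mapping.lookup p k = Poly_Mapping.lookup (\<Sum>w\<in>Poly_Mapping.keys p. Poly_Mapping.single w (Poly_Mapping.lookup p w)) k" by simp
qed

lemma evalt_mult_mono:
  "evalt a b n (c * (mono u :: (nat \<Rightarrow>\<^sub>0 nat) \<Rightarrow>\<^sub>0 'k::field)) = evalt a b n c * monom 1 (dg a b n u)"
proof -
  have "c * mono u = (\<Sum>w\<in>Poly_Mapping.keys c. Poly_Mapping.single w (Poly_Mapping.lookup c w)) * mono u"
    by (subst pm_expand[of c]) simp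
  also have "\<dots> = (\<Sum>w\<in>Poly_Mapping.keys c. Poly_Mapping.single (w + u) (Poly_Mapping.lookup c w))"
    by (simp add: sum_distrib_right mono_def mult_single)
  finally have "evalt a b n (c * mono u) = (\<Sum>w\<in>Poly_Mapping.keys c. monom (Poly_Mapping.lookup c w) (dg a b n w) * monom 1 (dg a b n u))"
    by (simp add: evalt_sum evalt_single dg_add mult_monom)
  also have "\<dots> = evalt a b n c * monom 1 (dg a b n u)"
    by (simp add: evalt_dg sum_distrib_right)
  finally show ?thesis .
qed


lemma polys_add: "p \<in> polys_n n \<Longrightarrow> q \<in> polys_n n \<Longrightarrow> p + q \<in> polys_n n"
  unfolding polys_n_def using keys_add[of p q] by blast

lemma polys_diff: "p \<in> polys_n n \<Longrightarrow> q \<in> polys_n n \<Longrightarrow> p - q \<in> polys_n n"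
  unfolding polys_n_def using keys_diff[of p q] by blast

lemma polys_zero: "0 \<in> polys_n n" by (simp add: polys_n_def)

lemma polys_sum: "(\<And>x. x \<in> S \<Longrightarrow> f x \<in> polys_n n) \<Longrightarrow> sum f S \<in> polys_n n"
  by (induction S rule: infinite_finite_induct) (auto intro!: polys_add polys_zero)

lemma polys_mult_mono:
  fixes c :: "(nat \<Rightarrow>\<^sub>0 nat) \<Rightarrow>\<^sub>0 'k::field"
  assumes "c \<in> polys_n n" "Poly_Mapping.keys u \<subseteq> {..<n}"
  shows "c * mono u \<in> polys_n n"
  unfolding polys_n_def
proof (rule CollectI, rule ballI)
  fix w assume "w \<in> Poly_Mapping.keys (c * mono u)"
  then obtain x y where "w = x + y" "x \<in> Poly_Mapping.keys c" "y \<in> Poly_Mapping.keys (mono u :: (nat \<Rightarrow>\<^sub>0 nat) \<Rightarrow>\<^sub>0 'k)"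
    using keys_mult[of c "mono u"] by blast
  then show "Poly_Mapping.keys w \<subseteq> {..<n}"
    using assms keys_add[of x y] by (auto simp: polys_n_def mono_def split: if_splits)
qed

lemma polys_const: "Poly_Mapping.single 0 c \<in> polys_n n"
  by (simp add: polys_n_def)

lemma int_dg_diff:
  "int (dg a b n u) - int (dg a b n v) = wsum n (\<lambda>j. int (agen a b n j)) (\<lambda>j. int (Poly_Mapping.lookup u j) - int (Poly_Mapping.lookup v j))"
  by (simp add: dg_def wsum_def sum_subtractf algebra_simps)

lemma ig_sub:
  assumes "n > 1" "x \<in> ideal_gen (polys_n n) (lattice_binomials a b n :: ((nat \<Rightarrow>\<^sub>0 nat) \<Rightarrow>\<^sub>0 'k::field) set)"
  shows "x \<in> polys_n n \<and> evalt a b n x = 0"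
proof -
  obtain m :: nat and c s where x: "x = (\<Sum>j<m. c j * s j)" and cs: "\<forall>j<m. c j \<in> polys_n n \<and> s j \<in> lattice_binomials a b n"
    using assms(2) unfolding ideal_gen_def by blast
  have t: "c j * s j \<in> polys_n n \<and> evalt a b n (c j * s j) = 0" if j: "j < m" for j
  proof -
    obtain u v where s: "s j = mono u - mono v" and u: "Poly_Mapping.keys u \<subseteq> {..<n}" and v: "Poly_Mapping.keys v \<subseteq> {..<n}"
      and l: "(\<lambda>i. int (Poly_Mapping.lookup u i) - int (Poly_Mapping.lookup v i)) \<in> lattice a b n"
      using cs j unfolding lattice_binomials_def by blast
    have "dg a b n u = dg a b n v" using lattice_ker[OF assms(1) l] int_dg_diff[of a b n u v] by simp
    moreover have "c j * s j = c j * mono u - c j * mono v" by (simp add: s right_diff_distrib)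
    ultimately show ?thesis using cs j u v
      by (simp add: evalt_diff evalt_mult_mono polys_diff polys_mult_mono)
  qed
  show ?thesis unfolding x using t
    by (auto intro!: polys_sum simp: evalt_sum)
qed

lemma ig_zero: "0 \<in> ideal_gen R S"
  unfolding ideal_gen_def by (rule CollectI, rule exI[of _ 0]) auto

lemma ig_single: "c \<in> R \<Longrightarrow> s \<in> S \<Longrightarrow> c * s \<in> ideal_gen R S"
  unfolding ideal_gen_def by (rule CollectI, rule exI[of _ 1], rule exI[of _ "\<lambda>_. c"], rule exI[of _ "\<lambda>_. s"]) auto

lemma sum_split_nat: "(\<Sum>j<m1 + (m2::nat). f j) = (\<Sum>j<m1. f j) + (\<Sum>j<m2. f (m1 + j))"
  by (induction m2) (auto simp: add.assoc)

lemma ig_add: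
  assumes "x \<in> ideal_gen R S" "y \<in> ideal_gen R S"
  shows "x + y \<in> ideal_gen R S"
proof -
  obtain m1 :: nat and c1 s1 where x: "x = (\<Sum>j<m1. c1 j * s1 j)" "\<forall>j<m1. c1 j \<in> R \<and> s1 j \<in> S"
    using assms(1) unfolding ideal_gen_def by blast
  obtain m2 :: nat and c2 s2 where y: "y = (\<Sum>j<m2. c2 j * s2 j)" "\<forall>j<m2. c2 j \<in> R \<and> s2 j \<in> S"
    using assms(2) unfolding ideal_gen_def by blast
  define c where "c j = (if j < m1 then c1 j else c2 (j - m1))" for j
  define s where "s j = (if j < m1 then s1 j else s2 (j - m1))" for j
  have "x + y = (\<Sum>j<m1 + m2. c j * s j)"
    unfolding sum_split_nat x y c_def s_def by simp
  moreover have "\<forall>j<m1 + m2. c j \<in> R \<and> s j \<in> S"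
    using x y by (auto simp: c_def s_def)
  ultimately show ?thesis unfolding ideal_gen_def by blast
qed

lemma ig_sum: "(\<And>x. x \<in> A \<Longrightarrow> f x \<in> ideal_gen R S) \<Longrightarrow> sum f A \<in> ideal_gen R S"
  by (induction A rule: infinite_finite_induct) (auto intro: ig_add ig_zero)


lemma single_sum: "Poly_Mapping.single k (sum f S) = (\<Sum>x\<in>S. Poly_Mapping.single k (f x))"
  by (induction S rule: infinite_finite_induct) (auto simp: single_add)

lemma toric_sub:
  assumes "n > 1" "gcd (rb b n) a = 1"
    and pk: "(p :: (nat \<Rightarrow>\<^sub>0 nat) \<Rightarrow>\<^sub>0 'k::field) \<in> toric_kernel a b n"
  shows "p \<in> ideal_gen (polys_n n) (lattice_binomials a b n)"
proof -
  have pp: "p \<in> polys_n n" and pe: "evalt a b n p = 0" using pk by (auto simp: toric_kernel_def)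
  define K where "K = Poly_Mapping.keys p"
  have fK: "finite K" by (simp add: K_def)
  define D where "D = dg a b n"
  define R where "R d = (SOME w. w \<in> K \<and> D w = d)" for d
  have RK: "R (D u) \<in> K \<and> D (R (D u)) = D u" if "u \<in> K" for u
    unfolding R_def by (rule someI[of "\<lambda>w. w \<in> K \<and> D w = D u" u]) (simp add: that)
  have coef: "(\<Sum>u\<in>{u\<in>K. D u = d}. Poly_Mapping.lookup p u) = 0" for d
  proof -
    have "0 = coeff (evalt a b n p) d" using pe by simp
    also have "\<dots> = (\<Sum>u\<in>K. if D u = d then Poly_Mapping.lookup p u else 0)"
      unfolding evalt_dg K_def D_def by (simp add: coeff_sum coeff_monom)
    also have "\<dots> = (\<Sum>u\<in>{u\<in>K. D u = d}. Poly_Mapping.lookup p u)"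
      using fK by (simp add: sum.inter_filter)
    finally show ?thesis by simp
  qed
  have split: "Poly_Mapping.single u (Poly_Mapping.lookup p u) =
      Poly_Mapping.single 0 (Poly_Mapping.lookup p u) * (mono u - mono (R (D u))) + Poly_Mapping.single (R (D u)) (Poly_Mapping.lookup p u)" for u
    by (simp add: mono_def right_diff_distrib mult_single)
  have "p = (\<Sum>u\<in>K. Poly_Mapping.single u (Poly_Mapping.lookup p u))"
    unfolding K_def by (rule pm_expand)
  also have "\<dots> = (\<Sum>u\<in>K. Poly_Mapping.single 0 (Poly_Mapping.lookup p u) * (mono u - mono (R (D u))))
      + (\<Sum>u\<in>K. Poly_Mapping.single (R (D u)) (Poly_Mapping.lookup p u))"
    unfolding split by (simp add: sum.distrib)
  also have "(\<Sum>u\<in>K. Poly_Mapping.single (R (D u)) (Poly_Mapping.lookup p u)) = 0"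
  proof -
    have "(\<Sum>u\<in>K. Poly_Mapping.single (R (D u)) (Poly_Mapping.lookup p u))
        = (\<Sum>d\<in>D ` K. \<Sum>u\<in>{x. x \<in> K \<and> D x = d}. Poly_Mapping.single (R (D u)) (Poly_Mapping.lookup p u))"
      using fK by (rule sum.image_gen)
    also have "\<dots> = (\<Sum>d\<in>D ` K. \<Sum>u\<in>{x. x \<in> K \<and> D x = d}. Poly_Mapping.single (R d) (Poly_Mapping.lookup p u))"
      by (intro sum.cong) auto
    also have "\<dots> = (\<Sum>d\<in>D ` K. Poly_Mapping.single (R d) (\<Sum>u\<in>{x. x \<in> K \<and> D x = d}. Poly_Mapping.lookup p u))"
      by (simp add: single_sum)
    also have "\<dots> = 0" using coef by simp
    finally show ?thesis .
  qed
  finally have pe2: "p = (\<Sum>u\<in>K. Poly_Mapping.single 0 (Poly_Mapping.lookup p u) * (mono u - mono (R (D u))))"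
    by simp
  have kn: "Poly_Mapping.keys u \<subseteq> {..<n}" if "u \<in> K" for u
    using pp that unfolding polys_n_def K_def by blast
  have bin: "(mono u - mono (R (D u)) :: (nat \<Rightarrow>\<^sub>0 nat) \<Rightarrow>\<^sub>0 'k) \<in> lattice_binomials a b n" if u: "u \<in> K" for u
  proof -
    let ?v = "R (D u)"
    have v: "?v \<in> K" "D ?v = D u" using RK[OF u] by auto
    have ku: "Poly_Mapping.keys u \<subseteq> {..<n}" "Poly_Mapping.keys ?v \<subseteq> {..<n}" using kn u v by auto
    have sup: "\<forall>j\<ge>n. int (Poly_Mapping.lookup u j) - int (Poly_Mapping.lookup ?v j) = 0"
    proof (intro allI impI)
      fix j assume "n \<le> j"
      then have "j \<notin> Poly_Mapping.keys u" "j \<notin> Poly_Mapping.keys ?v" using ku by auto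
      then show "int (Poly_Mapping.lookup u j) - int (Poly_Mapping.lookup ?v j) = 0"
        by (simp add: in_keys_iff)
    qed
    have "int (dg a b n u) - int (dg a b n ?v) = 0" using v(2) unfolding D_def by simp
    then have "wsum n (\<lambda>j. int (agen a b n j)) (\<lambda>j. int (Poly_Mapping.lookup u j) - int (Poly_Mapping.lookup ?v j)) = 0"
      unfolding int_dg_diff .
    then have lat: "(\<lambda>j. int (Poly_Mapping.lookup u j) - int (Poly_Mapping.lookup ?v j)) \<in> lattice a b n"
      by (rule ker_lattice[OF assms(1,2) sup])
    show ?thesis unfolding lattice_binomials_def
      by (rule CollectI, rule exI[of _ u], rule exI[of _ ?v]) (use ku lat in simp)
  qed
  have "(\<Sum>u\<in>K. Poly_Mapping.single 0 (Poly_Mapping.lookup p u) * (mono u - mono (R (D u)))) \<in> ideal_gen (polys_n n) (lattice_binomials a b n)"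
    by (intro ig_sum ig_single polys_const bin)
  then show ?thesis using pe2 by simp
qed

theorem corollary11:
  fixes a b n :: nat
  assumes "a > 0" and "b > 1" and "n > 1" and "gcd (rb b n) a = 1"
  shows "(toric_kernel a b n :: ((nat \<Rightarrow>\<^sub>0 nat) \<Rightarrow>\<^sub>0 'k::field) set)
         = ideal_gen (polys_n n) (lattice_binomials a b n)"
proof
  show "(toric_kernel a b n :: ((nat \<Rightarrow>\<^sub>0 nat) \<Rightarrow>\<^sub>0 'k::field) set) \<subseteq> ideal_gen (polys_n n) (lattice_binomials a b n)"
    using toric_sub[OF assms(3,4)] by blast
  show "ideal_gen (polys_n n) (lattice_binomials a b n) \<subseteq> (toric_kernel a b n :: ((nat \<Rightarrow>\<^sub>0 nat) \<Rightarrow>\<^sub>0 'k::field) set)"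
    using ig_sub[OF assms(3)] by (auto simp: toric_kernel_def)
qed

end
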